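(* Let $G$ be a finite simple connected graph with $n\ge 2$ vertices and maximum degree $\Delta$. Then (a) $c_{\infty}(G)\ge \dfrac{\iota_e n}{\Delta^2-\Delta+\iota_e(\Delta+1)}\ge \dfrac{\iota_e n}{2\Delta^2}$; (b) $c_{\infty}(G)\ge \dfrac{\iota_v n}{3\Delta+\iota_v(\Delta+1)}$; (c) $c_{\infty}(G)\ge \dfrac{\iota_v n}{4\Delta}$, where $\iota_e=\iota_e(G)$ and $\iota_v=\iota_v(G)$.
   Context: Cops and Robber with an infinitely fast robber: the game is played on a graph $G$. A set of cops first choose initial vertices (several cops may share a vertex); then the robber, knowing their positions, chooses a vertex. Then the players move in alternating rounds, cops first. In the cops' turn each cop either stays or moves to an adjacent vertex; in the robber's turn she either stays or moves along any path of $G$ starting at her current vertex that contains no vertex currently occupied by a cop. The cops win if at some point a cop moves to the vertex occupied by the robber. $c_{\infty}(G)$ is the minimum number of cops for which the cops have a strategy that guarantees a win. For $S\subseteq V(G)$, $\partial S$ is the set of edges with exactly one endpoint in $S$, and $N(S)$ is the set of vertices having a neighbour in $S$. The edge- and vertex-isoperimetric numbers are $\iota_e(G)=\min_{0<|S|\le n/2}|\partial S|/|S|$ and $\iota_v(G)=\min_{0<|S|\le n/2}|N(S)\setminus S|/|S|$. *)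

theory Defs
  imports Complex_Main
begin

definition simple_graph :: "'a set \<Rightarrow> ('a \<Rightarrow> 'a \<Rightarrow> bool) \<Rightarrow> bool" where
  "simple_graph V E \<longleftrightarrow> finite V \<and> (\<forall>u v. E u v \<longrightarrow> u \<in> V \<and> v \<in> V)
     \<and> (\<forall>u v. E u v \<longrightarrow> E v u) \<and> (\<forall>u. \<not> E u u)"

definition connected_graph :: "'a set \<Rightarrow> ('a \<Rightarrow> 'a \<Rightarrow> bool) \<Rightarrow> bool" where
  "connected_graph V E \<longleftrightarrow> (\<forall>u\<in>V. \<forall>v\<in>V. E\<^sup>*\<^sup>* u v)"

definition degree :: "('a \<Rightarrow> 'a \<Rightarrow> bool) \<Rightarrow> 'a \<Rightarrow> nat" where
  "degree E u = card {v. E u v}"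

definition max_degree :: "'a set \<Rightarrow> ('a \<Rightarrow> 'a \<Rightarrow> bool) \<Rightarrow> nat" where
  "max_degree V E = Max (degree E ` V)"

definition edge_boundary :: "'a set \<Rightarrow> ('a \<Rightarrow> 'a \<Rightarrow> bool) \<Rightarrow> 'a set \<Rightarrow> ('a \<times> 'a) set" where
  "edge_boundary V E S = {(u, v). u \<in> S \<and> v \<in> V - S \<and> E u v}"

definition nbhd :: "'a set \<Rightarrow> ('a \<Rightarrow> 'a \<Rightarrow> bool) \<Rightarrow> 'a set \<Rightarrow> 'a set" where
  "nbhd V E S = {v \<in> V. \<exists>u\<in>S. E u v}"

definition small_sets :: "'a set \<Rightarrow> 'a set set" where
  "small_sets V = {S. S \<subseteq> V \<and> S \<noteq> {} \<and> 2 * card S \<le> card V}"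

definition iota_e :: "'a set \<Rightarrow> ('a \<Rightarrow> 'a \<Rightarrow> bool) \<Rightarrow> real" where
  "iota_e V E = Min ((\<lambda>S. real (card (edge_boundary V E S)) / real (card S)) ` small_sets V)"

definition iota_v :: "'a set \<Rightarrow> ('a \<Rightarrow> 'a \<Rightarrow> bool) \<Rightarrow> real" where
  "iota_v V E = Min ((\<lambda>S. real (card (nbhd V E S - S)) / real (card S)) ` small_sets V)"

text \<open>Cops and infinitely fast robber. Cop positions: a list (one entry per cop).\<close>

definition cop_move :: "('a \<Rightarrow> 'a \<Rightarrow> bool) \<Rightarrow> 'a list \<Rightarrow> 'a list \<Rightarrow> bool" where
  "cop_move E C C' \<longleftrightarrow> list_all2 (\<lambda>a b. b = a \<or> E a b) C C'"

text \<open>Vertices the robber can reach from r along a path of G avoiding the set X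
  of cop-occupied vertices (r itself is assumed unoccupied).\<close>
definition robber_reach :: "('a \<Rightarrow> 'a \<Rightarrow> bool) \<Rightarrow> 'a set \<Rightarrow> 'a \<Rightarrow> 'a \<Rightarrow> bool" where
  "robber_reach E X r r' \<longleftrightarrow> (\<lambda>u v. E u v \<and> v \<notin> X)\<^sup>*\<^sup>* r r'"

text \<open>cop_win E C r: it is the cops' turn, cops at C, robber at r, and the cops can
  force a capture (least fixed point = attractor of the reachability game).\<close>
inductive cop_win :: "('a \<Rightarrow> 'a \<Rightarrow> bool) \<Rightarrow> 'a list \<Rightarrow> 'a \<Rightarrow> bool" for E where
  capture: "cop_move E C C' \<Longrightarrow> r \<in> set C' \<Longrightarrow> cop_win E C r"
| step: "cop_move E C C' \<Longrightarrow> r \<notin> set C' \<Longrightarrow>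
          (\<forall>r'. robber_reach E (set C') r r' \<longrightarrow> cop_win E C' r') \<Longrightarrow> cop_win E C r"

definition cops_win_with :: "'a set \<Rightarrow> ('a \<Rightarrow> 'a \<Rightarrow> bool) \<Rightarrow> nat \<Rightarrow> bool" where
  "cops_win_with V E k \<longleftrightarrow> (\<exists>C. length C = k \<and> set C \<subseteq> V \<and>
      (\<forall>r \<in> V - set C. cop_win E C r))"

definition c_inf :: "'a set \<Rightarrow> ('a \<Rightarrow> 'a \<Rightarrow> bool) \<Rightarrow> nat" where
  "c_inf V E = (LEAST k. cops_win_with V E k)"

end

theory Submission
  imports Defs
begin


lemma sg_finite: "simple_graph V E \<Longrightarrow> finite V" by (simp add: simple_graph_def)
lemma sg_V: "simple_graph V E \<Longrightarrow> E u v \<Longrightarrow> u \<in> V \<and> v \<in> V" by (simp add: simple_graph_def)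
lemma sg_sym: "simple_graph V E \<Longrightarrow> E u v \<Longrightarrow> E v u" by (simp add: simple_graph_def)
lemma sg_irr: "simple_graph V E \<Longrightarrow> \<not> E u u" by (simp add: simple_graph_def)

lemma deg_le: "simple_graph V E \<Longrightarrow> v \<in> V \<Longrightarrow> degree E v \<le> max_degree V E"
  unfolding max_degree_def by (intro Max_ge) (auto dest: sg_finite)

lemma nb_fin: "simple_graph V E \<Longrightarrow> finite {u. E v u}"
  by (rule finite_subset[of _ V]) (auto dest: sg_V sg_finite)

definition cl :: "('a \<Rightarrow> 'a \<Rightarrow> bool) \<Rightarrow> 'a list \<Rightarrow> 'a set" where
  "cl E C = set C \<union> {v. \<exists>c\<in>set C. E c v}"
definition WW :: "'a set \<Rightarrow> ('a \<Rightarrow> 'a \<Rightarrow> bool) \<Rightarrow> 'a list \<Rightarrow> 'a set" where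
  "WW V E C = V - cl E C"
definition EW :: "'a set \<Rightarrow> ('a \<Rightarrow> 'a \<Rightarrow> bool) \<Rightarrow> 'a list \<Rightarrow> 'a \<Rightarrow> 'a \<Rightarrow> bool" where
  "EW V E C u v \<longleftrightarrow> E u v \<and> u \<in> WW V E C \<and> v \<in> WW V E C"
definition comp :: "'a set \<Rightarrow> ('a \<Rightarrow> 'a \<Rightarrow> bool) \<Rightarrow> 'a list \<Rightarrow> 'a \<Rightarrow> 'a set" where
  "comp V E C w = {v. (EW V E C)\<^sup>*\<^sup>* w v}"
definition closed :: "'a set \<Rightarrow> ('a \<Rightarrow> 'a \<Rightarrow> bool) \<Rightarrow> 'a list \<Rightarrow> 'a set \<Rightarrow> bool" where
  "closed V E C S \<longleftrightarrow> S \<subseteq> WW V E C \<and> (\<forall>u\<in>S. \<forall>v. EW V E C u v \<longrightarrow> v \<in> S)"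

context
  fixes V :: "'a set" and E :: "'a \<Rightarrow> 'a \<Rightarrow> bool" and C :: "'a list"
  assumes G: "simple_graph V E" and CV: "set C \<subseteq> V"
begin

lemma EW_sym: "EW V E C u v \<Longrightarrow> EW V E C v u"
  by (auto simp: EW_def dest: sg_sym[OF G])

lemma rt_sym: "(EW V E C)\<^sup>*\<^sup>* u v \<Longrightarrow> (EW V E C)\<^sup>*\<^sup>* v u"
proof (induction rule: rtranclp_induct)
  case base then show ?case by simp
next
  case (step y z) then show ?case
    by (meson EW_sym converse_rtranclp_into_rtranclp)
qed

lemma comp_sub: "w \<in> WW V E C \<Longrightarrow> comp V E C w \<subseteq> WW V E C"
proof
  fix v assume w: "w \<in> WW V E C" and "v \<in> comp V E C w"
  then have "(EW V E C)\<^sup>*\<^sup>* w v" by (simp add: comp_def)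
  then show "v \<in> WW V E C" using w
    by (induction rule: rtranclp_induct) (auto simp: EW_def)
qed

lemma comp_self: "w \<in> comp V E C w" by (simp add: comp_def)

lemma comp_closed: "w \<in> WW V E C \<Longrightarrow> closed V E C (comp V E C w)"
  unfolding closed_def using comp_sub
  by (auto simp: comp_def intro: rtranclp.rtrancl_into_rtrancl)

lemma comp_in: "closed V E C S \<Longrightarrow> w \<in> S \<Longrightarrow> comp V E C w \<subseteq> S"
proof
  fix v assume S: "closed V E C S" and w: "w \<in> S" and "v \<in> comp V E C w"
  then have "(EW V E C)\<^sup>*\<^sup>* w v" by (simp add: comp_def)
  then show "v \<in> S" using w S
    by (induction rule: rtranclp_induct) (auto simp: closed_def)
qed

lemma closed_diff: "closed V E C S \<Longrightarrow> closed V E C T \<Longrightarrow> closed V E C (S - T)"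
  unfolding closed_def using EW_sym by blast

lemma closed_W: "closed V E C (WW V E C)"
  by (auto simp: closed_def EW_def)

lemma finW: "finite (WW V E C)"
  using sg_finite[OF G] by (simp add: WW_def)

lemma closed_fin: "closed V E C S \<Longrightarrow> finite S"
  using finW by (auto simp: closed_def intro: finite_subset)

lemma bdry_sub: "closed V E C A \<Longrightarrow> A \<subseteq> S \<Longrightarrow> S \<subseteq> WW V E C \<Longrightarrow>
   edge_boundary V E A \<subseteq> edge_boundary V E S"
  unfolding edge_boundary_def closed_def EW_def by blast

lemma nbhd_sub: "closed V E C S \<Longrightarrow> nbhd V E S - S \<subseteq> cl E C - set C"
  unfolding nbhd_def closed_def EW_def WW_def cl_def using sg_sym[OF G] by blast

lemma cl_V: "cl E C \<subseteq> V"
  using CV sg_V[OF G] by (auto simp: cl_def)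

lemma card_clC: "card (cl E C - set C) \<le> length C * max_degree V E"
proof -
  have "cl E C - set C \<subseteq> (\<Union>c\<in>set C. {v. E c v})" by (auto simp: cl_def)
  then have "card (cl E C - set C) \<le> card (\<Union>c\<in>set C. {v. E c v})"
    by (intro card_mono) (auto intro: nb_fin[OF G])
  also have "\<dots> \<le> (\<Sum>c\<in>set C. card {v. E c v})" by (rule card_UN_le) simp
  also have "\<dots> \<le> (\<Sum>c\<in>set C. max_degree V E)"
    by (intro sum_mono) (use deg_le[OF G] CV in \<open>auto simp: degree_def\<close>)
  also have "\<dots> = card (set C) * max_degree V E" by simp
  also have "\<dots> \<le> length C * max_degree V E" by (simp add: card_length)
  finally show ?thesis .
qed

lemma card_V_le: "card V \<le> card (WW V E C) + length C + card (cl E C - set C)"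
proof -
  have "V \<subseteq> WW V E C \<union> set C \<union> (cl E C - set C)" by (auto simp: WW_def)
  then have "card V \<le> card (WW V E C \<union> set C \<union> (cl E C - set C))"
    by (intro card_mono) (use finW sg_finite[OF G] cl_V in \<open>auto intro: finite_subset\<close>)
  also have "\<dots> \<le> card (WW V E C) + card (set C) + card (cl E C - set C)"
    by (meson add_le_mono1 card_Un_le le_trans)
  finally show ?thesis using card_length[of C] by linarith
qed

lemma bdryW: "card (edge_boundary V E (WW V E C)) \<le> (max_degree V E - 1) * card (cl E C - set C)"
proof -
  let ?X = "cl E C - set C"
  have sub: "edge_boundary V E (WW V E C) \<subseteq> (\<Union>v\<in>?X. (\<lambda>u. (u,v)) ` {u\<in>WW V E C. E v u})"
  proof
    fix p assume "p \<in> edge_boundary V E (WW V E C)"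
    then obtain u v where p: "p = (u,v)" "u \<in> WW V E C" "v \<in> V - WW V E C" "E u v"
      by (auto simp: edge_boundary_def)
    have "v \<in> cl E C" using p by (auto simp: WW_def)
    moreover have "v \<notin> set C"
    proof
      assume "v \<in> set C"
      then have "u \<in> cl E C" using sg_sym[OF G p(4)] by (auto simp: cl_def)
      then show False using p by (auto simp: WW_def)
    qed
    ultimately show "p \<in> (\<Union>v\<in>?X. (\<lambda>u. (u,v)) ` {u\<in>WW V E C. E v u})"
      using p sg_sym[OF G p(4)] by auto
  qed
  have finX: "finite ?X" using cl_V sg_finite[OF G] by (auto intro: finite_subset)
  have each: "card ((\<lambda>u. (u,v)) ` {u\<in>WW V E C. E v u}) \<le> max_degree V E - 1" if v: "v \<in> ?X" for v
  proof -
    obtain c where c: "c \<in> set C" "E c v" using v by (auto simp: cl_def)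
    have "{u\<in>WW V E C. E v u} \<subseteq> {u. E v u} - {c}"
      using c CV by (auto simp: WW_def cl_def)
    then have "card {u\<in>WW V E C. E v u} \<le> card ({u. E v u} - {c})"
      by (intro card_mono) (auto intro: nb_fin[OF G])
    also have "\<dots> = degree E v - 1"
      using c sg_sym[OF G c(2)] nb_fin[OF G] by (simp add: degree_def)
    also have "\<dots> \<le> max_degree V E - 1"
      using deg_le[OF G, of v] v cl_V by auto
    finally show ?thesis using card_image_le
      by (metis (no_types, lifting) finite_subset le_trans \<open>{u\<in>WW V E C. E v u} \<subseteq> {u. E v u} - {c}\<close> finite_Diff nb_fin[OF G])
  qed
  have "card (edge_boundary V E (WW V E C)) \<le> card (\<Union>v\<in>?X. (\<lambda>u. (u,v)) ` {u\<in>WW V E C. E v u})"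
    by (intro card_mono[OF _ sub]) (use finX finW in auto)
  also have "\<dots> \<le> (\<Sum>v\<in>?X. card ((\<lambda>u. (u,v)) ` {u\<in>WW V E C. E v u}))"
    by (rule card_UN_le[OF finX])
  also have "\<dots> \<le> (\<Sum>v\<in>?X. max_degree V E - 1)" by (intro sum_mono each)
  finally show ?thesis by (simp add: mult.commute)
qed

end



lemma small_fin: "simple_graph V E \<Longrightarrow> finite (small_sets V)"
  by (rule finite_subset[of _ "Pow V"]) (auto simp: small_sets_def dest: sg_finite)

lemma ie_le: assumes G: "simple_graph V E" and S: "S \<subseteq> V" "2 * card S \<le> card V"
  shows "iota_e V E * card S \<le> card (edge_boundary V E S)"
proof (cases "S = {}")
  case True then show ?thesis by simp
next
  case False
  then have Ss: "S \<in> small_sets V" using S by (simp add: small_sets_def)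
  have finS: "finite S" using S sg_finite[OF G] finite_subset by blast
  then have cS: "card S > 0" using False by auto
  have "iota_e V E \<le> card (edge_boundary V E S) / card S"
    unfolding iota_e_def using Ss small_fin[OF G] by (intro Min_le) auto
  then show ?thesis using cS by (simp add: field_simps)
qed

lemma iv_le: assumes G: "simple_graph V E" and S: "S \<subseteq> V" "2 * card S \<le> card V"
  shows "iota_v V E * card S \<le> card (nbhd V E S - S)"
proof (cases "S = {}")
  case True then show ?thesis by simp
next
  case False
  then have Ss: "S \<in> small_sets V" using S by (simp add: small_sets_def)
  have finS: "finite S" using S sg_finite[OF G] finite_subset by blast
  then have cS: "card S > 0" using False by auto
  have "iota_v V E \<le> card (nbhd V E S - S) / card S"
    unfolding iota_v_def using Ss small_fin[OF G] by (intro Min_le) auto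
  then show ?thesis using cS by (simp add: field_simps)
qed

context
  fixes V :: "'a set" and E :: "'a \<Rightarrow> 'a \<Rightarrow> bool" and C :: "'a list"
  assumes G: "simple_graph V E" and CV: "set C \<subseteq> V"
begin

lemma W_V: "WW V E C \<subseteq> V" by (auto simp: WW_def)

lemma bd_ind:
  assumes small: "\<forall>w\<in>WW V E C. 2 * card (comp V E C w) \<le> card V"
  shows "closed V E C S \<Longrightarrow> iota_e V E * card S \<le> card (edge_boundary V E S)"
proof (induction "card S" arbitrary: S rule: less_induct)
  case less
  have SW: "S \<subseteq> WW V E C" using less.prems by (simp add: closed_def)
  show ?case
  proof (cases "2 * card S \<le> card V")
    case True then show ?thesis using ie_le[OF G] SW W_V by blast
  next
    case False
    then have "S \<noteq> {}" by auto
    then obtain w where w: "w \<in> S" by auto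
    define K where "K = comp V E C w"
    have wW: "w \<in> WW V E C" using w SW by auto
    have Kc: "closed V E C K" unfolding K_def using comp_closed[OF G CV wW] .
    have KS: "K \<subseteq> S" unfolding K_def using comp_in[OF G CV less.prems w] .
    have wK: "w \<in> K" unfolding K_def by (rule comp_self[OF G CV])
    have Ksm: "2 * card K \<le> card V" using small wW K_def by auto
    have finS: "finite S" using closed_fin[OF G CV less.prems] .
    have SKc: "closed V E C (S - K)" using closed_diff[OF G CV less.prems Kc] .
    have lt: "card (S - K) < card S" using finS w wK by (intro psubset_card_mono) auto
    have IH: "iota_e V E * card (S - K) \<le> card (edge_boundary V E (S - K))"
      using less.hyps[OF lt SKc] .
    have IK: "iota_e V E * card K \<le> card (edge_boundary V E K)"
      using ie_le[OF G _ Ksm] KS SW W_V by blast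
    have cS: "card S = card K + card (S - K)"
      using card_Diff_subset[OF finite_subset[OF KS finS] KS] card_mono[OF finS KS] by simp
    have fb: "finite (edge_boundary V E S)"
      by (rule finite_subset[of _ "V \<times> V"]) (auto simp: edge_boundary_def dest: sg_V[OF G] intro: sg_finite[OF G])
    have s1: "edge_boundary V E K \<subseteq> edge_boundary V E S" using bdry_sub[OF G CV Kc KS SW] .
    have s2: "edge_boundary V E (S - K) \<subseteq> edge_boundary V E S" using bdry_sub[OF G CV SKc _ SW] by blast
    have dj: "edge_boundary V E K \<inter> edge_boundary V E (S - K) = {}" by (auto simp: edge_boundary_def)
    have "card (edge_boundary V E K) + card (edge_boundary V E (S - K)) \<le> card (edge_boundary V E S)"
      using card_Un_disjoint[OF finite_subset[OF s1 fb] finite_subset[OF s2 fb] dj]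
        card_mono[OF fb, of "edge_boundary V E K \<union> edge_boundary V E (S - K)"] s1 s2 by simp
    then show ?thesis using IH IK cS by (simp add: algebra_simps)
  qed
qed

lemma grow:
  fixes t :: real
  assumes tpos: "0 < t"
  shows "closed V E C S \<Longrightarrow> \<forall>w\<in>S. card (comp V E C w) < t \<Longrightarrow> t \<le> card S \<Longrightarrow>
    \<exists>S'. closed V E C S' \<and> S' \<subseteq> S \<and> t \<le> card S' \<and> card S' < 2 * t"
proof (induction "card S" arbitrary: S rule: less_induct)
  case less
  have SW: "S \<subseteq> WW V E C" using less.prems by (simp add: closed_def)
  have finS: "finite S" using closed_fin[OF G CV less.prems(1)] .
  have "S \<noteq> {}" using less.prems(3) tpos by auto
  then obtain w where w: "w \<in> S" by auto
  define K where "K = comp V E C w"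
  have wW: "w \<in> WW V E C" using w SW by auto
  have Kc: "closed V E C K" unfolding K_def using comp_closed[OF G CV wW] .
  have KS: "K \<subseteq> S" unfolding K_def using comp_in[OF G CV less.prems(1) w] .
  have wK: "w \<in> K" unfolding K_def by (rule comp_self[OF G CV])
  have Kt: "card K < t" using less.prems(2) w K_def by auto
  have SKc: "closed V E C (S - K)" using closed_diff[OF G CV less.prems(1) Kc] .
  have lt: "card (S - K) < card S" using finS w wK by (intro psubset_card_mono) auto
  have cS: "card S = card K + card (S - K)"
    using card_Diff_subset[OF finite_subset[OF KS finS] KS] card_mono[OF finS KS] by simp
  show ?case
  proof (cases "t \<le> card (S - K)")
    case True
    from less.hyps[OF lt SKc _ True] less.prems(2) obtain S' where
      "closed V E C S'" "S' \<subseteq> S - K" "t \<le> card S'" "card S' < 2 * t" by auto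
    then show ?thesis by blast
  next
    case False
    have "real (card S) < 2 * t" using False Kt cS by simp
    then show ?thesis using less.prems(1,3) by blast
  qed
qed

end



context
  fixes V :: "'a set" and E :: "'a \<Rightarrow> 'a \<Rightarrow> bool" and C :: "'a list"
  assumes G: "simple_graph V E" and CV: "set C \<subseteq> V"
  and small: "\<forall>w\<in>WW V E C. 2 * card (comp V E C w) \<le> card V"
  and D1: "max_degree V E \<ge> 1"
begin

lemma basic:
  "real (card V) \<le> card (WW V E C) + length C + card (cl E C - set C)"
  "real (card (cl E C - set C)) \<le> length C * real (max_degree V E)"
  "card (WW V E C) \<le> card V"
  using card_V_le[OF G CV] card_clC[OF G CV] 
    card_mono[OF sg_finite[OF G] W_V[OF G CV]] by (simp_all flip: of_nat_mult of_nat_add)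

lemma finY: "finite (cl E C - set C)"
  using cl_V[OF G CV] sg_finite[OF G] by (auto intro: finite_subset)

lemma KLa:
  assumes ie0: "iota_e V E \<ge> 0"
  shows "iota_e V E * card V \<le> length C * ((real (max_degree V E))^2 - max_degree V E
           + iota_e V E * (max_degree V E + 1))"
proof -
  define ie where "ie = iota_e V E"
  define D where "D = real (max_degree V E)"
  define m where "m = real (card (WW V E C))"
  define y where "y = real (card (cl E C - set C))"
  define k where "k = real (length C)"
  define n where "n = real (card V)"
  have h1: "ie * m \<le> card (edge_boundary V E (WW V E C))"
    unfolding ie_def m_def using bd_ind[OF G CV small closed_W[OF G CV]] .
  have h2: "card (edge_boundary V E (WW V E C)) \<le> (D - 1) * y"
  proof -
    have "card (edge_boundary V E (WW V E C)) \<le> (max_degree V E - 1) * card (cl E C - set C)"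
      using bdryW[OF G CV] .
    then have "real (card (edge_boundary V E (WW V E C))) \<le> real ((max_degree V E - 1) * card (cl E C - set C))"
      by linarith
    then show ?thesis using D1 by (simp add: D_def y_def of_nat_diff)
  qed
  have hn: "n \<le> m + k + y" and hy: "y \<le> k * D"
    using basic unfolding n_def m_def k_def y_def D_def by auto
  have D1': "D \<ge> 1" using D1 by (simp add: D_def)
  have k0: "k \<ge> 0" by (simp add: k_def)
  have "ie * n \<le> ie * (m + k + y)" using hn ie0 by (simp add: ie_def mult_left_mono)
  also have "\<dots> = ie * m + ie * k + ie * y" by (simp add: algebra_simps)
  also have "\<dots> \<le> (D - 1) * y + ie * k + ie * y" using h1 h2 by simp
  also have "\<dots> = (D - 1 + ie) * y + ie * k" by (simp add: algebra_simps)
  also have "\<dots> \<le> (D - 1 + ie) * (k * D) + ie * k"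
    using hy D1' ie0 by (simp add: ie_def mult_left_mono)
  also have "\<dots> = k * (D^2 - D + ie * (D + 1))" by (simp add: algebra_simps power2_eq_square)
  finally show ?thesis by (simp add: ie_def n_def k_def D_def add.commute)
qed

lemma iv_closed:
  assumes "closed V E C S" "2 * card S \<le> card V"
  shows "iota_v V E * card S \<le> card (cl E C - set C)"
proof -
  have "iota_v V E * card S \<le> card (nbhd V E S - S)"
    using iv_le[OF G _ assms(2)] assms(1) W_V[OF G CV] by (auto simp: closed_def)
  also have "card (nbhd V E S - S) \<le> card (cl E C - set C)"
    by (rule card_mono[OF finY nbhd_sub[OF G CV assms(1)]])
  finally show ?thesis by simp
qed

lemma Sb: "\<exists>S. closed V E C S \<and> 3 * card S \<ge> card (WW V E C) \<and> 2 * card S \<le> card V"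
proof -
  let ?W = "WW V E C"
  let ?m = "card ?W"
  show ?thesis
  proof (cases "2 * ?m \<le> card V")
    case True then show ?thesis using closed_W[OF G CV] by auto
  next
    case F1: False
    show ?thesis
    proof (cases "\<exists>w\<in>?W. real ?m / 3 \<le> card (comp V E C w)")
      case True
      then obtain w where "w \<in> ?W" "real ?m / 3 \<le> card (comp V E C w)" by auto
      then show ?thesis using comp_closed[OF G CV] small
        by (intro exI[of _ "comp V E C w"]) auto
    next
      case False
      then have lt: "\<forall>w\<in>?W. card (comp V E C w) < real ?m / 3" by auto
      have tpos: "0 < real ?m / 3" using F1 by simp
      obtain S' where S': "closed V E C S'" "S' \<subseteq> ?W" "real ?m / 3 \<le> card S'" "card S' < 2 * (real ?m / 3)"
        using grow[OF G CV tpos closed_W[OF G CV] lt] by auto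
      show ?thesis
      proof (cases "2 * card S' \<le> card V")
        case True then show ?thesis using S' by (intro exI[of _ S']) auto
      next
        case False
        have Rc: "closed V E C (?W - S')" using closed_diff[OF G CV closed_W[OF G CV] S'(1)] .
        have cR: "card (?W - S') = ?m - card S'"
          using card_Diff_subset[OF finite_subset[OF S'(2) finW[OF G CV]] S'(2)] .
        have "card S' \<le> ?m" using card_mono[OF finW[OF G CV] S'(2)] .
        moreover have "?m \<le> card V" using basic(3) .
        ultimately show ?thesis using Rc cR S' False
          by (intro exI[of _ "?W - S'"]) auto
      qed
    qed
  qed
qed

lemma KLb:
  assumes iv0: "iota_v V E \<ge> 0"
  shows "iota_v V E * card V \<le> length C * (3 * real (max_degree V E)
           + iota_v V E * (max_degree V E + 1))"
proof -
  define iv where "iv = iota_v V E"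
  define D where "D = real (max_degree V E)"
  define m where "m = real (card (WW V E C))"
  define y where "y = real (card (cl E C - set C))"
  define k where "k = real (length C)"
  define n where "n = real (card V)"
  obtain S where S: "closed V E C S" "3 * card S \<ge> card (WW V E C)" "2 * card S \<le> card V"
    using Sb by auto
  have h1: "iv * card S \<le> y" unfolding iv_def y_def using iv_closed[OF S(1,3)] .
  have h3: "m \<le> 3 * card S" using S(2) unfolding m_def by linarith
  have hn: "n \<le> m + k + y" and hy: "y \<le> k * D"
    using basic unfolding n_def m_def k_def y_def D_def by auto
  have "iv * n \<le> iv * (m + k + y)" using hn iv0 by (simp add: iv_def mult_left_mono)
  also have "\<dots> = iv * m + iv * k + iv * y" by (simp add: algebra_simps)
  also have "iv * m \<le> iv * (3 * card S)" using h3 iv0 by (simp add: iv_def mult_left_mono)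
  also have "iv * (3 * card S) \<le> 3 * y" using h1 by simp
  also have "3 * y + iv * k + iv * y = (3 + iv) * y + iv * k" by (simp add: algebra_simps)
  also have "\<dots> \<le> (3 + iv) * (k * D) + iv * k"
    using hy iv0 by (simp add: iv_def mult_left_mono)
  also have "\<dots> = k * (3 * D + iv * (D + 1))" by (simp add: algebra_simps)
  finally show ?thesis by (simp add: iv_def n_def k_def D_def add.commute)
qed

lemma KLc:
  assumes iv0: "iota_v V E \<ge> 0" and ivD: "iota_v V E \<le> max_degree V E"
    and iv5: "card V \<ge> 5 \<Longrightarrow> 2 * iota_v V E \<le> 3"
  shows "iota_v V E * card V \<le> 4 * length C * real (max_degree V E)"
proof -
  define iv where "iv = iota_v V E"
  define D where "D = real (max_degree V E)"
  define m where "m = real (card (WW V E C))"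
  define y where "y = real (card (cl E C - set C))"
  define k where "k = real (length C)"
  define n where "n = real (card V)"
  have hn: "n \<le> m + k + y" and hy: "y \<le> k * D"
    using basic unfolding n_def m_def k_def y_def D_def by auto
  have D1': "D \<ge> 1" using D1 by (simp add: D_def)
  have "iv * n \<le> 4 * k * D"
  proof (cases "n \<le> 4 * m")
    case True
    obtain S where S: "closed V E C S" "4 * card S \<ge> card V" "2 * card S \<le> card V"
    proof (cases "2 * card (WW V E C) \<le> card V")
      case True
      then show ?thesis using that closed_W[OF G CV] \<open>n \<le> 4 * m\<close>
        unfolding n_def m_def by (metis of_nat_le_iff of_nat_mult of_nat_numeral)
    next
      case F1: False
      show ?thesis
      proof (cases "\<exists>w\<in>WW V E C. real (card V) / 4 \<le> card (comp V E C w)")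
        case True
        then obtain w where w: "w \<in> WW V E C" "real (card V) / 4 \<le> card (comp V E C w)" by auto
        then have "real (card V) \<le> real (4 * card (comp V E C w))" by simp
        then have "card V \<le> 4 * card (comp V E C w)" by (simp only: of_nat_le_iff)
        then show ?thesis using comp_closed[OF G CV w(1)] small w(1) that by auto
      next
        case False
        then have lt: "\<forall>w\<in>WW V E C. card (comp V E C w) < real (card V) / 4" by auto
        have tpos: "0 < real (card V) / 4" using F1 basic(3) by simp
        have "real (card V) / 4 \<le> card (WW V E C)" using True unfolding n_def m_def by simp
        then obtain S' where S': "closed V E C S'" "real (card V) / 4 \<le> card S'"
            "card S' < 2 * (real (card V) / 4)"
          using grow[OF G CV tpos closed_W[OF G CV] lt] by auto
        then show ?thesis using that by auto
      qed
    qed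
    have h1: "iv * card S \<le> y" unfolding iv_def y_def using iv_closed[OF S(1,3)] .
    have "iv * n \<le> iv * (4 * card S)" using S(2) iv0 unfolding n_def iv_def
      by (intro mult_left_mono) linarith+
    also have "\<dots> \<le> 4 * y" using h1 by simp
    also have "\<dots> \<le> 4 * k * D" using hy by simp
    finally show ?thesis .
  next
    case False
    then have big: "3 * n < 4 * (k + y)" using hn by (simp add: algebra_simps)
    show ?thesis
    proof (cases "n \<le> 4 * k")
      case True
      have "iv * n \<le> D * n" using ivD unfolding iv_def D_def n_def by (intro mult_right_mono) auto
      also have "\<dots> \<le> D * (4 * k)" using True D1' by (intro mult_left_mono) auto
      finally show ?thesis by (simp add: algebra_simps)
    next
      case F2: False
      have "k \<noteq> 0" using big hy unfolding n_def by auto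
      then have "k \<ge> 1" unfolding k_def by (simp add: Suc_le_eq)
      then have l1: "length C \<ge> 1" unfolding k_def by simp
      have "real (4 * length C) < real (card V)" using F2 unfolding n_def k_def by simp
      then have "4 * length C < card V" by (simp only: of_nat_less_iff)
      then have "card V \<ge> 5" using l1 by linarith
      then have "n \<ge> 5" unfolding n_def by simp
      then have "2 * iv \<le> 3" using iv5 unfolding iv_def n_def by simp
      have "y \<le> k * D" by (rule hy)
      have kD: "k \<le> k * D" using D1' \<open>k \<ge> 1\<close> by simp
      have "2 * (iv * n) \<le> 3 * n" using \<open>2 * iv \<le> 3\<close> \<open>n \<ge> 5\<close>
        by (metis mult.assoc mult_right_mono order_trans less_eq_real_def linorder_not_le zero_le_numeral
            \<open>n \<ge> 5\<close> of_nat_0_le_iff)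
      have "4 * k + 4 * y \<le> 8 * (k * D)" using hy kD by linarith
      then have "2 * (iv * n) \<le> 8 * (k * D)" using big \<open>2 * (iv * n) \<le> 3 * n\<close> by (smt (verit))
      then show ?thesis by (simp add: ac_simps)
    qed
  qed
  then show ?thesis by (simp add: iv_def n_def k_def D_def)
qed

end



definition big :: "'a set \<Rightarrow> ('a \<Rightarrow> 'a \<Rightarrow> bool) \<Rightarrow> 'a list \<Rightarrow> 'a \<Rightarrow> bool" where
  "big V E C r \<longleftrightarrow> r \<in> WW V E C \<and> card V < 2 * card (comp V E C r)"

lemma cop_move_len: "cop_move E C C' \<Longrightarrow> length C' = length C"
  by (simp add: cop_move_def list_all2_lengthD)

lemma cop_move_set: "cop_move E C C' \<Longrightarrow> set C' \<subseteq> cl E C"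
proof
  fix x assume m: "cop_move E C C'" and x: "x \<in> set C'"
  then obtain i where i: "i < length C'" "C' ! i = x" by (auto simp: in_set_conv_nth)
  have l: "length C = length C'" using m by (simp add: cop_move_def list_all2_lengthD)
  have "x = C ! i \<or> E (C ! i) x" using m i by (auto simp: cop_move_def list_all2_conv_all_nth)
  moreover have "C ! i \<in> set C" using i l by simp
  ultimately show "x \<in> cl E C" by (auto simp: cl_def)
qed

lemma no_win:
  assumes G: "simple_graph V E"
    and hyp: "\<forall>C'. length C' = k \<and> set C' \<subseteq> V \<longrightarrow> (\<exists>w. big V E C' w)"
  shows "cop_win E C r \<Longrightarrow> length C = k \<Longrightarrow> set C \<subseteq> V \<Longrightarrow> big V E C r \<Longrightarrow> False"
proof (induction rule: cop_win.induct)
  case (capture C C' r)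
  then show ?case using cop_move_set[OF capture(1)] by (auto simp: big_def WW_def)
next
  case (step C C' r)
  have l: "length C' = k" using cop_move_len[OF step(1)] step(4) by simp
  have sC: "set C' \<subseteq> cl E C" using cop_move_set[OF step(1)] .
  have s: "set C' \<subseteq> V" using sC cl_V[OF G step(5)] by blast
  obtain w where w: "big V E C' w" using hyp l s by blast
  have rW: "r \<in> WW V E C" and rb: "card V < 2 * card (comp V E C r)" using step(6) by (auto simp: big_def)
  have wW: "w \<in> WW V E C'" and wb: "card V < 2 * card (comp V E C' w)" using w by (auto simp: big_def)
  have A: "comp V E C r \<subseteq> V" using comp_sub[OF G step(5) rW] W_V[OF G step(5)] by blast
  have B: "comp V E C' w \<subseteq> V" using comp_sub[OF G s wW] W_V[OF G s] by blast
  have finV: "finite V" using sg_finite[OF G] .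
  have "comp V E C r \<inter> comp V E C' w \<noteq> {}"
  proof
    assume dj: "comp V E C r \<inter> comp V E C' w = {}"
    have "card (comp V E C r \<union> comp V E C' w) = card (comp V E C r) + card (comp V E C' w)"
      using dj A B finV by (intro card_Un_disjoint) (auto intro: finite_subset)
    moreover have "card (comp V E C r \<union> comp V E C' w) \<le> card V"
      using A B finV by (intro card_mono) auto
    ultimately show False using rb wb by linarith
  qed
  then obtain z where zr: "z \<in> comp V E C r" and zw: "z \<in> comp V E C' w" by blast
  have zW: "z \<in> WW V E C'" using comp_sub[OF G s wW] zw by blast
  have "comp V E C' w \<subseteq> comp V E C' z"
  proof
    fix v assume "v \<in> comp V E C' w"
    then have "(EW V E C')\<^sup>*\<^sup>* w v" by (simp add: comp_def)
    moreover have "(EW V E C')\<^sup>*\<^sup>* z w" using rt_sym[OF G s] zw by (simp add: comp_def)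
    ultimately show "v \<in> comp V E C' z" by (simp add: comp_def)
  qed
  then have "card (comp V E C' w) \<le> card (comp V E C' z)"
    using comp_sub[OF G s zW] W_V[OF G s] finV by (intro card_mono) (auto intro: finite_subset)
  then have bz: "big V E C' z" using zW wb by (simp add: big_def)
  have "(EW V E C)\<^sup>*\<^sup>* r z" using zr by (simp add: comp_def)
  then have "robber_reach E (set C') r z" unfolding robber_reach_def
    by (rule mono_rtranclp[rule_format, rotated]) (use sC in \<open>auto simp: EW_def WW_def\<close>)
  then show False using step(3) l s bz by blast
qed

lemma no_cops:
  assumes G: "simple_graph V E"
    and hyp: "\<forall>C'. length C' = k \<and> set C' \<subseteq> V \<longrightarrow> (\<exists>w. big V E C' w)"
  shows "\<not> cops_win_with V E k"
proof
  assume "cops_win_with V E k"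
  then obtain C where C: "length C = k" "set C \<subseteq> V" "\<forall>r\<in>V - set C. cop_win E C r"
    by (auto simp: cops_win_with_def)
  obtain w where w: "big V E C w" using hyp C by blast
  then have "w \<in> V - set C" by (auto simp: big_def WW_def cl_def)
  then show False using no_win[OF G hyp] C w by blast
qed

lemma cinf_ge:
  assumes G: "simple_graph V E"
    and H: "\<And>k. real k < B \<Longrightarrow> \<forall>C'. length C' = k \<and> set C' \<subseteq> V \<longrightarrow> (\<exists>w. big V E C' w)"
  shows "B \<le> real (c_inf V E)"
proof (rule ccontr)
  assume "\<not> B \<le> real (c_inf V E)"
  then have lt: "real (c_inf V E) < B" by simp
  have finV: "finite V" using sg_finite[OF G] .
  obtain xs where xs: "set xs = V" "distinct xs" using finite_distinct_list[OF finV] by blast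
  have "cops_win_with V E (card V)"
    unfolding cops_win_with_def
    by (rule exI[of _ xs]) (use xs distinct_card[OF xs(2)] in auto)
  then have "cops_win_with V E (c_inf V E)" unfolding c_inf_def by (rule LeastI)
  then show False using no_cops[OF G H[OF lt]] by simp
qed

lemma hyp_from:
  assumes G: "simple_graph V E" and num0: "0 \<le> num" and lt: "real k < num / den"
    and ineq: "\<And>C. length C = k \<Longrightarrow> set C \<subseteq> V \<Longrightarrow>
        \<forall>w\<in>WW V E C. 2 * card (comp V E C w) \<le> card V \<Longrightarrow> num \<le> real k * den"
  shows "\<forall>C'. length C' = k \<and> set C' \<subseteq> V \<longrightarrow> (\<exists>w. big V E C' w)"
proof (intro allI impI)
  fix C assume C: "length C = k \<and> set C \<subseteq> V"
  show "\<exists>w. big V E C w"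
  proof (rule ccontr)
    assume "\<nexists>w. big V E C w"
    then have "\<forall>w\<in>WW V E C. 2 * card (comp V E C w) \<le> card V" by (auto simp: big_def)
    then have le: "num \<le> real k * den" using ineq C by blast
    show False
    proof (cases "den > 0")
      case True
      then have "real k * den < num" using lt by (simp add: field_simps)
      then show False using le by simp
    next
      case False
      then have "num / den \<le> 0" using num0 by (simp add: divide_nonneg_nonpos)
      then show False using lt by simp
    qed
  qed
qed




lemma small_ne: "v \<in> V \<Longrightarrow> 2 \<le> card V \<Longrightarrow> {v} \<in> small_sets V"
  by (simp add: small_sets_def)

theorem mainTheorem3:
  fixes V :: "'a set" and E :: "'a \<Rightarrow> 'a \<Rightarrow> bool"
  assumes "simple_graph V E" and "connected_graph V E" and "card V \<ge> 2"
  defines "n \<equiv> real (card V)" and "D \<equiv> real (max_degree V E)"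
    and "ie \<equiv> iota_e V E" and "iv \<equiv> iota_v V E"
  shows "real (c_inf V E) \<ge> ie * n / (D^2 - D + ie * (D + 1))
       \<and> ie * n / (D^2 - D + ie * (D + 1)) \<ge> ie * n / (2 * D^2)
       \<and> real (c_inf V E) \<ge> iv * n / (3 * D + iv * (D + 1))
       \<and> real (c_inf V E) \<ge> iv * n / (4 * D)"
proof -
  note G = assms(1)
  have finV: "finite V" using sg_finite[OF G] .
  obtain v0 where v0: "v0 \<in> V" using assms(3) by fastforce
  have ssne: "small_sets V \<noteq> {}" using small_ne[OF v0 assms(3)] by blast
  have D1: "max_degree V E \<ge> 1"
  proof -
    have "\<exists>u\<in>V. \<exists>v\<in>V. u \<noteq> v"
    proof (rule ccontr)
      assume "\<not> ?thesis"
      then have "V \<subseteq> {v0}" using v0 by blast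
      then have "card V \<le> 1" using card_mono[of "{v0}" V] by auto
      then show False using assms(3) by simp
    qed
    then obtain u v where uv: "u \<in> V" "v \<in> V" "u \<noteq> v" by blast
    then have "E\<^sup>*\<^sup>* u v" using assms(2) by (simp add: connected_graph_def)
    then obtain x where "E u x" using uv(3) by (cases rule: converse_rtranclpE) auto
    then have "{x. E u x} \<noteq> {}" by auto
    then have "degree E u \<ge> 1" using nb_fin[OF G, of u] by (simp add: degree_def Suc_le_eq card_gt_0_iff)
    then show ?thesis using deg_le[OF G uv(1)] by simp
  qed
  have D1': "D \<ge> 1" using D1 by (simp add: D_def)
  have ie0: "ie \<ge> 0" unfolding ie_def iota_e_def
    using small_fin[OF G] ssne by (intro Min.boundedI) auto
  have iv0: "iv \<ge> 0" unfolding iv_def iota_v_def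
    using small_fin[OF G] ssne by (intro Min.boundedI) auto
  have ieD: "ie \<le> D"
  proof -
    have "ie * card {v0} \<le> card (edge_boundary V E {v0})"
      unfolding ie_def using ie_le[OF G, of "{v0}"] v0 assms(3) by simp
    moreover have "edge_boundary V E {v0} \<subseteq> Pair v0 ` {u. E v0 u}"
      by (auto simp: edge_boundary_def)
    then have "card (edge_boundary V E {v0}) \<le> degree E v0"
      unfolding degree_def using nb_fin[OF G, of v0]
      by (meson card_image_le card_mono finite_imageI le_trans)
    ultimately show ?thesis using deg_le[OF G v0] unfolding D_def by simp
  qed
  have ivD: "iv \<le> D"
  proof -
    have "iv * card {v0} \<le> card (nbhd V E {v0} - {v0})"
      unfolding iv_def using iv_le[OF G, of "{v0}"] v0 assms(3) by simp
    moreover have "nbhd V E {v0} - {v0} \<subseteq> {u. E v0 u}"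
      by (auto simp: nbhd_def)
    then have "card (nbhd V E {v0} - {v0}) \<le> degree E v0"
      unfolding degree_def using nb_fin[OF G, of v0] by (simp add: card_mono)
    ultimately show ?thesis using deg_le[OF G v0] unfolding D_def by simp
  qed
  have iv5: "2 * iv \<le> 3" if n5: "card V \<ge> 5"
  proof -
    obtain S where S: "S \<subseteq> V" "card S = card V div 2"
      using obtain_subset_with_card_n[of "card V div 2" V] by auto
    have h0: "iv * card S \<le> card (nbhd V E S - S)"
      unfolding iv_def using iv_le[OF G S(1)] S(2) by simp
    have "card (nbhd V E S - S) \<le> card (V - S)"
      using finV by (intro card_mono) (auto simp: nbhd_def)
    also have "\<dots> = card V - card S" using S(1) finV by (simp add: card_Diff_subset finite_subset)
    finally have "card (nbhd V E S - S) \<le> card V - card S" .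
    then have h: "iv * card S \<le> real (card V - card S)" using h0
      by (meson of_nat_le_iff order_trans)
    have s2: "card S \<ge> 2" using n5 S(2) by simp
    have "card V - card S \<le> card S + 1" using S(2) by simp
    then have "iv * card S \<le> real (card S) + 1" using h by linarith
    moreover have s2r: "real (card S) \<ge> 2" using s2 by simp
    ultimately have "2 * (iv * card S) \<le> 3 * card S" by linarith
    then have "(2 * iv) * card S \<le> 3 * card S" by (simp only: mult.assoc)
    then show ?thesis using s2r mult_le_cancel_right_pos[of "real (card S)" "2 * iv" 3] by simp
  qed
  have a: "real (c_inf V E) \<ge> ie * n / (D^2 - D + ie * (D + 1))"
  proof (rule cinf_ge[OF G])
    fix k assume lt: "real k < ie * n / (D^2 - D + ie * (D + 1))"
    show "\<forall>C'. length C' = k \<and> set C' \<subseteq> V \<longrightarrow> (\<exists>w. big V E C' w)"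
    proof (rule hyp_from[OF G _ lt])
      show "0 \<le> ie * n" using ie0 by (simp add: n_def)
    next
      fix C assume C: "length C = k" "set C \<subseteq> V" "\<forall>w\<in>WW V E C. 2 * card (comp V E C w) \<le> card V"
      have "iota_e V E \<ge> 0" using ie0 by (simp add: ie_def)
      from KLa[OF G C(2) C(3) D1 this] C(1)
      show "ie * n \<le> real k * (D^2 - D + ie * (D + 1))"
        unfolding ie_def n_def D_def by (simp add: add.commute)
    qed
  qed
  have b: "real (c_inf V E) \<ge> iv * n / (3 * D + iv * (D + 1))"
  proof (rule cinf_ge[OF G])
    fix k assume lt: "real k < iv * n / (3 * D + iv * (D + 1))"
    show "\<forall>C'. length C' = k \<and> set C' \<subseteq> V \<longrightarrow> (\<exists>w. big V E C' w)"
    proof (rule hyp_from[OF G _ lt])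
      show "0 \<le> iv * n" using iv0 by (simp add: n_def)
    next
      fix C assume C: "length C = k" "set C \<subseteq> V" "\<forall>w\<in>WW V E C. 2 * card (comp V E C w) \<le> card V"
      have "iota_v V E \<ge> 0" using iv0 by (simp add: iv_def)
      from KLb[OF G C(2) C(3) D1 this] C(1)
      show "iv * n \<le> real k * (3 * D + iv * (D + 1))"
        unfolding iv_def n_def D_def by (simp add: add.commute)
    qed
  qed
  have c: "real (c_inf V E) \<ge> iv * n / (4 * D)"
  proof (rule cinf_ge[OF G])
    fix k assume lt: "real k < iv * n / (4 * D)"
    show "\<forall>C'. length C' = k \<and> set C' \<subseteq> V \<longrightarrow> (\<exists>w. big V E C' w)"
    proof (rule hyp_from[OF G _ lt])
      show "0 \<le> iv * n" using iv0 by (simp add: n_def)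
    next
      fix C assume C: "length C = k" "set C \<subseteq> V" "\<forall>w\<in>WW V E C. 2 * card (comp V E C w) \<le> card V"
      have "iota_v V E \<ge> 0" "iota_v V E \<le> max_degree V E"
        "card V \<ge> 5 \<Longrightarrow> 2 * iota_v V E \<le> 3"
        using iv0 ivD iv5 by (simp_all add: iv_def D_def)
      from KLc[OF G C(2) C(3) D1 this]
      have "iv * n \<le> 4 * real (length C) * D"
        unfolding iv_def n_def D_def by simp
      then show "iv * n \<le> real k * (4 * D)" using C(1) by simp
    qed
  qed
  have second: "ie * n / (D^2 - D + ie * (D + 1)) \<ge> ie * n / (2 * D^2)"
  proof (cases "ie = 0")
    case True then show ?thesis by simp
  next
    case False
    then have iep: "ie > 0" using ie0 by simp
    have den0: "D^2 - D + ie * (D + 1) > 0"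
    proof -
      have "D^2 - D \<ge> 0" using D1' by (simp add: power2_eq_square)
      moreover have "ie * (D + 1) > 0" using iep D1' by simp
      ultimately show ?thesis by linarith
    qed
    have "ie * (D + 1) \<le> D * (D + 1)" using ieD D1' by (intro mult_right_mono) auto
    then have le: "D^2 - D + ie * (D + 1) \<le> 2 * D^2" by (simp add: power2_eq_square algebra_simps)
    have num: "ie * n \<ge> 0" using ie0 by (simp add: n_def)
    have "0 < 2 * D^2 * (D^2 - D + ie * (D + 1))" using den0 D1' by simp
    from divide_left_mono[OF le num this] show ?thesis .
  qed
  show ?thesis using a b c second by blast
qed


end
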